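(* Let $P$ and $Q$ be graded posets of ranks $m+1$ and $n+1$ respectively. Then $$\Theta(\Psi(P\diamond^* Q))=\begin{bmatrix} m+n\\ n\end{bmatrix}_q\cdot\Theta(\Psi(P))\cdot\Theta(\Psi(Q)).$$
   Context: All posets are graded with minimum $\hat0$, maximum $\hat1$ and rank function $\rho$. The dual diamond product is $P\diamond^*Q=\big((P-\{\hat1_P\})\times(Q-\{\hat1_Q\})\big)\cup\{\hat1\}$, where the first part carries the componentwise (Cartesian product) order and $\hat1$ is a new maximum; it has rank $m+n+1$. For such a poset $P$ of rank $r+1$, its $\mathbf{a}\mathbf{b}$-index is $\Psi(P)=\sum_{S\subseteq\{1,\dots,r\}} f_S\, v_S$, where for $S=\{s_1<\cdots<s_k\}$, $f_S$ is the number of chains $\hat0<x_1<\cdots<x_k<\hat1$ with $\rho(x_i)=s_i$, and $v_S=v_1\cdots v_r$ with $v_i=\mathbf{b}$ if $i\in S$, $v_i=\mathbf{a}-\mathbf{b}$ otherwise ($\mathbf{a},\mathbf{b}$ non-commuting variables). The Major MacMahon map $\Theta:\mathbb{Z}\langle\mathbf{a},\mathbf{b}\rangle\to\mathbb{Z}[q]$ is linear with $\Theta(u_1\cdots u_r)=\prod_{i:\,u_i=\mathbf{b}}q^i$ on monomials. $[k]=1+\cdots+q^{k-1}$, $[k]!=[k]\cdots[1]$, $[0]!=1$, $\begin{bmatrix} m+n\\ n\end{bmatrix}_q=\frac{[m+n]!}{[m]!\,[n]!}$. *)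

theory Defs
  imports Main "HOL-Computational_Algebra.Polynomial"
begin

definition is_chain :: "'a set \<Rightarrow> ('a \<Rightarrow> 'a \<Rightarrow> bool) \<Rightarrow> bool" where
  "is_chain C le \<longleftrightarrow> (\<forall>u\<in>C. \<forall>v\<in>C. le u v \<or> le v u)"

definition covers :: "'a set \<Rightarrow> ('a \<Rightarrow> 'a \<Rightarrow> bool) \<Rightarrow> 'a \<Rightarrow> 'a \<Rightarrow> bool" where
  "covers X le x y \<longleftrightarrow> x \<in> X \<and> y \<in> X \<and> le x y \<and> x \<noteq> y \<and>
     \<not> (\<exists>z\<in>X. le x z \<and> le z y \<and> z \<noteq> x \<and> z \<noteq> y)"

definition graded_poset :: "'a set \<Rightarrow> ('a \<Rightarrow> 'a \<Rightarrow> bool) \<Rightarrow> bool" where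
  "graded_poset X le \<longleftrightarrow>
     finite X \<and>
     (\<forall>x\<in>X. le x x) \<and>
     (\<forall>x\<in>X. \<forall>y\<in>X. le x y \<and> le y x \<longrightarrow> x = y) \<and>
     (\<forall>x\<in>X. \<forall>y\<in>X. \<forall>z\<in>X. le x y \<and> le y z \<longrightarrow> le x z) \<and>
     (\<exists>z\<in>X. \<forall>x\<in>X. le z x) \<and>
     (\<exists>t\<in>X. \<forall>x\<in>X. le x t) \<and>
     (\<exists>\<rho>::'a \<Rightarrow> nat. \<forall>x y. covers X le x y \<longrightarrow> \<rho> y = Suc (\<rho> x))"

definition pbot :: "'a set \<Rightarrow> ('a \<Rightarrow> 'a \<Rightarrow> bool) \<Rightarrow> 'a" where
  "pbot X le = (THE z. z \<in> X \<and> (\<forall>x\<in>X. le z x))"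

definition ptop :: "'a set \<Rightarrow> ('a \<Rightarrow> 'a \<Rightarrow> bool) \<Rightarrow> 'a" where
  "ptop X le = (THE t. t \<in> X \<and> (\<forall>x\<in>X. le x t))"

text \<open>Rank function: rho(x) = (number of elements of a longest chain in [0,x]) - 1;
  in a graded poset this is the usual rank function.\<close>
definition prank :: "'a set \<Rightarrow> ('a \<Rightarrow> 'a \<Rightarrow> bool) \<Rightarrow> 'a \<Rightarrow> nat" where
  "prank X le x = Max {card C | C. C \<subseteq> {y\<in>X. le y x} \<and> is_chain C le} - 1"

definition poset_rank :: "'a set \<Rightarrow> ('a \<Rightarrow> 'a \<Rightarrow> bool) \<Rightarrow> nat" where
  "poset_rank X le = prank X le (ptop X le)"

definition flag_f :: "'a set \<Rightarrow> ('a \<Rightarrow> 'a \<Rightarrow> bool) \<Rightarrow> nat set \<Rightarrow> nat" where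
  "flag_f X le S = card {C. C \<subseteq> X - {pbot X le, ptop X le} \<and> is_chain C le \<and>
                          inj_on (prank X le) C \<and> prank X le ` C = S}"

text \<open>An element of Z<a,b> is represented as a formal sum: a list of (coefficient, word)
  pairs; a word is a list of letters, False = a, True = b.\<close>
type_synonym abpoly = "(int \<times> bool list) list"

definition ab_mult :: "abpoly \<Rightarrow> abpoly \<Rightarrow> abpoly" where
  "ab_mult p q = [(c * d, u @ v). (c, u) \<leftarrow> p, (d, v) \<leftarrow> q]"

definition ab_scale :: "int \<Rightarrow> abpoly \<Rightarrow> abpoly" where
  "ab_scale k p = map (\<lambda>(c, u). (k * c, u)) p"

definition ab_one :: abpoly where "ab_one = [(1, [])]"
definition ab_b :: abpoly where "ab_b = [(1, [True])]"
definition ab_a_minus_b :: abpoly where "ab_a_minus_b = [(1, [False]), (-1, [True])]"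

definition vS :: "nat \<Rightarrow> nat set \<Rightarrow> abpoly" where
  "vS r S = foldr ab_mult (map (\<lambda>i. if i \<in> S then ab_b else ab_a_minus_b) [1..<r+1]) ab_one"

text \<open>ab-index of a poset of rank r+1: sum over S subset {1..r} of f_S v_S
  (subseqs [1..r] enumerates each subset of {1..r} exactly once).\<close>
definition ab_index :: "'a set \<Rightarrow> ('a \<Rightarrow> 'a \<Rightarrow> bool) \<Rightarrow> abpoly" where
  "ab_index X le = (let r = poset_rank X le - 1 in
     concat (map (\<lambda>S. ab_scale (int (flag_f X le S)) (vS r S))
                 (map set (subseqs [1..<r+1]))))"

definition theta_word :: "bool list \<Rightarrow> int poly" where
  "theta_word u = (\<Prod>i\<in>{i. 1 \<le> i \<and> i \<le> length u \<and> u ! (i - 1)}. monom 1 i)"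

definition Theta :: "abpoly \<Rightarrow> int poly" where
  "Theta p = (\<Sum>(c, u) \<leftarrow> p. of_int c * theta_word u)"

definition qint :: "nat \<Rightarrow> int poly" where
  "qint k = (\<Sum>j<k. monom 1 j)"

definition qfact :: "nat \<Rightarrow> int poly" where
  "qfact k = (\<Prod>i=1..k. qint i)"

definition qbinom :: "nat \<Rightarrow> nat \<Rightarrow> int poly" where
  "qbinom N k = qfact N div (qfact k * qfact (N - k))"

text \<open>Carrier ((P - {1}) x (Q - {1})) together with a new maximum, represented by None.\<close>
definition dd_carrier :: "'a set \<Rightarrow> ('a \<Rightarrow> 'a \<Rightarrow> bool) \<Rightarrow> 'b set \<Rightarrow> ('b \<Rightarrow> 'b \<Rightarrow> bool)
    \<Rightarrow> ('a \<times> 'b) option set" where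
  "dd_carrier X leX Y leY =
     insert None (Some ` ((X - {ptop X leX}) \<times> (Y - {ptop Y leY})))"

fun dd_le :: "('a \<Rightarrow> 'a \<Rightarrow> bool) \<Rightarrow> ('b \<Rightarrow> 'b \<Rightarrow> bool)
    \<Rightarrow> ('a \<times> 'b) option \<Rightarrow> ('a \<times> 'b) option \<Rightarrow> bool" where
  "dd_le leX leY _ None = True"
| "dd_le leX leY None (Some _) = False"
| "dd_le leX leY (Some (x, y)) (Some (x', y')) = (leX x x' \<and> leY y y')"

end

theory Submission
  imports Defs "HOL-Computational_Algebra.Polynomial_FPS"
begin

unbundle fps_syntax


locale fpo =
  fixes X :: "'a set" and le :: "'a \<Rightarrow> 'a \<Rightarrow> bool"
  assumes fin: "finite X"
    and rfl: "x \<in> X \<Longrightarrow> le x x"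
    and antisym: "x \<in> X \<Longrightarrow> y \<in> X \<Longrightarrow> le x y \<Longrightarrow> le y x \<Longrightarrow> x = y"
    and trn: "x \<in> X \<Longrightarrow> y \<in> X \<Longrightarrow> z \<in> X \<Longrightarrow> le x y \<Longrightarrow> le y z \<Longrightarrow> le x z"
    and ex_bot: "\<exists>z\<in>X. \<forall>x\<in>X. le z x"
    and ex_top: "\<exists>t\<in>X. \<forall>x\<in>X. le x t"
begin

definition "bt = pbot X le"
definition "tp = ptop X le"
abbreviation "rk \<equiv> prank X le"
definition "down x = {y\<in>X. le y x}"

lemma bot_eq: assumes "z \<in> X" "\<forall>x\<in>X. le z x" shows "pbot X le = z"
  unfolding pbot_def using assms antisym by (intro the_equality) auto

lemma top_eq: assumes "z \<in> X" "\<forall>x\<in>X. le x z" shows "ptop X le = z"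
  unfolding ptop_def using assms antisym by (intro the_equality) auto

lemma bt: "bt \<in> X" "x \<in> X \<Longrightarrow> le bt x"
  using ex_bot bot_eq unfolding bt_def by auto

lemma tp: "tp \<in> X" "x \<in> X \<Longrightarrow> le x tp"
  using ex_top top_eq unfolding tp_def by auto

lemma down_sub: "down x \<subseteq> X" unfolding down_def by auto

lemma rk_props:
  assumes "x \<in> X"
  shows "\<exists>C. C \<subseteq> down x \<and> is_chain C le \<and> card C = rk x + 1"
    and "\<And>C. C \<subseteq> down x \<Longrightarrow> is_chain C le \<Longrightarrow> card C \<le> rk x + 1"
proof -
  define S where "S = {card C | C. C \<subseteq> {y\<in>X. le y x} \<and> is_chain C le}"
  have rkS: "rk x = Max S - 1" unfolding prank_def S_def by simp
  have Seq: "S = card ` {C. C \<subseteq> {y\<in>X. le y x} \<and> is_chain C le}" unfolding S_def by auto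
  have "finite {C. C \<subseteq> {y\<in>X. le y x} \<and> is_chain C le}"
    by (rule finite_subset[of _ "Pow X"]) (auto simp: fin)
  hence finS: "finite S" unfolding Seq by simp
  have "{x} \<subseteq> {y\<in>X. le y x}" using assms rfl by auto
  moreover have "is_chain {x} le" unfolding is_chain_def using assms rfl by auto
  ultimately have "1 \<in> S" unfolding S_def
    by (intro CollectI exI[where x="{x}"]) simp
  hence ge: "Max S \<ge> 1" using finS by simp
  have "Max S \<in> S" using finS \<open>1 \<in> S\<close> by (intro Max_in) auto
  then obtain C where C: "Max S = card C" "C \<subseteq> down x" "is_chain C le"
    unfolding S_def down_def by auto
  show "\<exists>C. C \<subseteq> down x \<and> is_chain C le \<and> card C = rk x + 1"
    using C ge rkS by (intro exI[of _ C]) simp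
  show "\<And>C. C \<subseteq> down x \<Longrightarrow> is_chain C le \<Longrightarrow> card C \<le> rk x + 1"
  proof -
    fix C assume "C \<subseteq> down x" "is_chain C le"
    hence "card C \<in> S" unfolding S_def down_def by auto
    hence "card C \<le> Max S" using finS by simp
    thus "card C \<le> rk x + 1" using ge rkS by simp
  qed
qed

lemma rk_eqI:
  assumes "x \<in> X" "C \<subseteq> down x" "is_chain C le" "card C = k + 1"
    "\<And>C. C \<subseteq> down x \<Longrightarrow> is_chain C le \<Longrightarrow> card C \<le> k + 1"
  shows "rk x = k"
proof -
  obtain C' where "C' \<subseteq> down x" "is_chain C' le" "card C' = rk x + 1"
    using rk_props(1)[OF assms(1)] by auto
  hence "rk x \<le> k" using assms(5)[of C'] by simp
  moreover have "k \<le> rk x" using rk_props(2)[OF assms(1,2,3)] assms(4) by simp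
  ultimately show ?thesis by simp
qed

lemma rk_less:
  assumes "x \<in> X" "y \<in> X" "le x y" "x \<noteq> y"
  shows "rk x < rk y"
proof -
  obtain C where C: "C \<subseteq> down x" "is_chain C le" "card C = rk x + 1"
    using rk_props(1)[OF assms(1)] by auto
  have finC: "finite C" using finite_subset[OF C(1) finite_subset[OF down_sub fin]] .
  have yC: "y \<notin> C"
  proof
    assume "y \<in> C" hence "le y x" using C(1) unfolding down_def by auto
    thus False using antisym assms by auto
  qed
  have cy: "\<forall>c\<in>C. le c y \<and> c \<in> X"
    using C(1) assms trn[of _ x y] unfolding down_def by auto
  have "insert y C \<subseteq> down y"
    using cy assms rfl unfolding down_def by auto
  moreover have "is_chain (insert y C) le"
    using C(2) cy assms rfl unfolding is_chain_def by auto
  ultimately have "card (insert y C) \<le> rk y + 1" by (rule rk_props(2)[OF assms(2)])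
  thus ?thesis using finC yC C(3) by simp
qed

lemma rk_mono: "x \<in> X \<Longrightarrow> y \<in> X \<Longrightarrow> le x y \<Longrightarrow> rk x \<le> rk y"
  using rk_less by (cases "x = y") (auto intro: less_imp_le)

lemma rk_bot: "rk bt = 0"
proof (rule rk_eqI[of bt "{bt}"])
  show "bt \<in> X" using bt by auto
  show "{bt} \<subseteq> down bt" using bt rfl unfolding down_def by auto
  show "is_chain {bt} le" using bt rfl unfolding is_chain_def by auto
  show "card {bt} = 0 + 1" by simp
  fix C assume "C \<subseteq> down bt"
  hence "C \<subseteq> {bt}" using bt antisym[of _ bt] unfolding down_def by auto
  thus "card C \<le> 0 + 1" using card_mono[of "{bt}" C] by simp
qed

lemma rk_pos: "x \<in> X \<Longrightarrow> x \<noteq> bt \<Longrightarrow> 0 < rk x"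
  using rk_less[of bt x] bt rk_bot by auto

lemma rk_lt_top: "x \<in> X \<Longrightarrow> x \<noteq> tp \<Longrightarrow> rk x < rk tp"
  using rk_less[of x tp] tp by auto

lemma chain_max:
  assumes "finite C" "C \<noteq> {}" "C \<subseteq> X" "is_chain C le"
  shows "\<exists>x\<in>C. \<forall>y\<in>C. le y x"
  using assms
proof (induction C rule: finite_ne_induct)
  case (singleton a) thus ?case using rfl by auto
next
  case (insert a C)
  have ch: "is_chain C le" using insert.prems unfolding is_chain_def by auto
  obtain x where x: "x \<in> C" "\<forall>y\<in>C. le y x" using insert ch by auto
  have "le x a \<or> le a x" using insert.prems x(1) unfolding is_chain_def by auto
  thus ?case
  proof
    assume "le x a"
    hence "\<forall>y\<in>C. le y a" using x insert.prems trn[of _ x a] by auto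
    thus ?thesis using insert.prems rfl by auto
  next
    assume "le a x" thus ?thesis using x by auto
  qed
qed

lemma chain_inj: assumes "C \<subseteq> X" "is_chain C le" shows "inj_on rk C"
proof
  fix x y assume "x \<in> C" "y \<in> C" "rk x = rk y"
  show "x = y"
  proof (rule ccontr)
    assume ne: "x \<noteq> y"
    have X: "x \<in> X" "y \<in> X" using assms \<open>x \<in> C\<close> \<open>y \<in> C\<close> by auto
    have "le x y \<or> le y x" using assms(2) \<open>x \<in> C\<close> \<open>y \<in> C\<close> unfolding is_chain_def by auto
    thus False using rk_less[OF X(1,2)] rk_less[OF X(2,1)] ne \<open>rk x = rk y\<close> by auto
  qed
qed

end


fun tw :: "nat \<Rightarrow> bool list \<Rightarrow> int poly" where
  "tw k [] = 1"
| "tw k (a # v) = (if a then monom 1 (Suc k) else 1) * tw (Suc k) v"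

lemma tw_eq: "(\<Prod>i\<in>{i. 1 \<le> i \<and> i \<le> length u \<and> u ! (i - 1)}. monom 1 (i + k)) = tw k u"
proof (induction u arbitrary: k)
  case Nil
  have "{i. 1 \<le> i \<and> i \<le> length ([]::bool list) \<and> ([]::bool list) ! (i - 1)} = {}" by auto
  thus ?case by (simp only: prod.empty tw.simps(1))
next
  case (Cons a v)
  let ?S = "{i. 1 \<le> i \<and> i \<le> length v \<and> v ! (i - 1)}"
  have seteq: "{i. 1 \<le> i \<and> i \<le> length (a#v) \<and> (a#v) ! (i - 1)} = (if a then {1} else {}) \<union> Suc ` ?S"
  proof (intro set_eqI iffI)
    fix x assume x: "x \<in> {i. 1 \<le> i \<and> i \<le> length (a#v) \<and> (a#v) ! (i - 1)}"
    show "x \<in> (if a then {1} else {}) \<union> Suc ` ?S"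
    proof (cases "x = 1")
      case True thus ?thesis using x by simp
    next
      case False
      then obtain j where j: "x = Suc j" "1 \<le> j" using x by (cases x) auto
      have "j \<in> ?S" using x j by (cases j) auto
      thus ?thesis using j by auto
    qed
  next
    fix x assume "x \<in> (if a then {1} else {}) \<union> Suc ` ?S"
    thus "x \<in> {i. 1 \<le> i \<and> i \<le> length (a#v) \<and> (a#v) ! (i - 1)}"
      by (cases a) (auto simp: nth_Cons')
  qed
  have fin: "finite ?S" by simp
  have "(\<Prod>i\<in>Suc ` ?S. monom (1::int) (i + k)) = (\<Prod>i\<in>?S. monom 1 (i + Suc k))"
    by (subst prod.reindex) auto
  also have "\<dots> = tw (Suc k) v" by (rule Cons.IH)
  finally have h: "(\<Prod>i\<in>Suc ` ?S. monom (1::int) (i + k)) = tw (Suc k) v" .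
  show ?case
  proof (cases a)
    case True
    have "(\<Prod>i\<in>{1} \<union> Suc ` ?S. monom (1::int) (i + k)) = monom 1 (Suc k) * (\<Prod>i\<in>Suc ` ?S. monom (1::int) (i + k))"
      by (subst prod.union_disjoint) auto
    thus ?thesis using seteq h True by simp
  next
    case False thus ?thesis using seteq h by simp
  qed
qed

lemma theta_word_tw: "theta_word u = tw 0 u"
  unfolding theta_word_def using tw_eq[where u=u and k=0] by simp

definition Th :: "nat \<Rightarrow> abpoly \<Rightarrow> int poly" where
  "Th k p = (\<Sum>(c, u) \<leftarrow> p. of_int c * tw k u)"

lemma Theta_Th: "Theta p = Th 0 p"
  unfolding Theta_def Th_def theta_word_tw ..

lemma Th_append[simp]: "Th k (p @ q) = Th k p + Th k q"
  unfolding Th_def by simp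

lemma Th_Nil[simp]: "Th k [] = 0" unfolding Th_def by simp

lemma Th_Cons[simp]: "Th k ((c,u) # p) = of_int c * tw k u + Th k p" unfolding Th_def by simp

lemma Th_concat: "Th k (concat ps) = (\<Sum>p\<leftarrow>ps. Th k p)"
  by (induction ps) auto

lemma Th_scale: "Th k (ab_scale e p) = of_int e * Th k p"
  by (induction p) (auto simp: ab_scale_def algebra_simps)

lemma Th_prefix: "Th k (map (\<lambda>(d,v). (e*d, a#v)) q) =
   of_int e * (if a then monom 1 (Suc k) else 1) * Th (Suc k) q"
  by (induction q) (auto simp: algebra_simps)

definition val :: "nat set \<Rightarrow> nat \<Rightarrow> int poly" where
  "val S i = (if i \<in> S then monom 1 i else 1 - monom 1 i)"

lemma Th_letter: "Th k (ab_mult (if Suc k \<in> S then ab_b else ab_a_minus_b) q) = val S (Suc k) * Th (Suc k) q"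
proof (cases "Suc k \<in> S")
  case True
  have "ab_mult ab_b q = map (\<lambda>(d,v). (1*d, True#v)) q"
    unfolding ab_mult_def ab_b_def by (induction q) auto
  thus ?thesis using True Th_prefix[of k 1 True q] by (simp add: val_def)
next
  case False
  have "ab_mult ab_a_minus_b q = map (\<lambda>(d,v). (1*d, False#v)) q @ map (\<lambda>(d,v). ((-1)*d, True#v)) q"
    unfolding ab_mult_def ab_a_minus_b_def by (induction q) auto
  thus ?thesis using False Th_prefix[of k 1 False q] Th_prefix[of k "-1" True q]
    by (simp add: val_def algebra_simps)
qed

lemma Th_foldr: "Th k (foldr ab_mult (map (\<lambda>i. if i \<in> S then ab_b else ab_a_minus_b) [Suc k..<Suc k + len]) ab_one)
   = (\<Prod>i\<in>{Suc k..<Suc k + len}. val S i)"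
proof (induction len arbitrary: k)
  case 0 thus ?case by (simp add: ab_one_def)
next
  case (Suc len)
  have u: "[Suc k..<Suc k + Suc len] = Suc k # [Suc (Suc k)..<Suc (Suc k) + len]"
    by (simp add: upt_rec)
  have p: "(\<Prod>i\<in>{Suc k..<Suc k + Suc len}. val S i) = val S (Suc k) * (\<Prod>i\<in>{Suc (Suc k)..<Suc (Suc k) + len}. val S i)"
    by (subst prod.atLeast_Suc_lessThan) auto
  let ?f = "\<lambda>i. if i \<in> S then ab_b else ab_a_minus_b"
  have "Th k (foldr ab_mult (map ?f [Suc k..<Suc k + Suc len]) ab_one)
     = Th k (ab_mult (if Suc k \<in> S then ab_b else ab_a_minus_b) (foldr ab_mult (map ?f [Suc (Suc k)..<Suc (Suc k) + len]) ab_one))"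
    by (simp only: u list.map foldr_Cons o_apply)
  also have "\<dots> = val S (Suc k) * Th (Suc k) (foldr ab_mult (map ?f [Suc (Suc k)..<Suc (Suc k) + len]) ab_one)"
    by (rule Th_letter)
  also have "\<dots> = val S (Suc k) * (\<Prod>i\<in>{Suc (Suc k)..<Suc (Suc k) + len}. val S i)"
    by (simp only: Suc.IH)
  finally show ?case using p by simp
qed

definition wS :: "nat \<Rightarrow> nat set \<Rightarrow> int poly" where
  "wS r S = (\<Prod>i\<in>{1..r}. val S i)"

lemma Theta_vS: "Theta (vS r S) = wS r S"
proof -
  have "Theta (vS r S) = Th 0 (foldr ab_mult (map (\<lambda>i. if i \<in> S then ab_b else ab_a_minus_b) [Suc 0..<Suc 0 + r]) ab_one)"
    unfolding Theta_Th vS_def by simp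
  also have "\<dots> = (\<Prod>i\<in>{Suc 0..<Suc 0 + r}. val S i)" by (rule Th_foldr)
  also have "{Suc 0..<Suc 0 + r} = {1..r}" by auto
  finally show ?thesis unfolding wS_def .
qed

lemma Theta_ab_index: "Theta (ab_index X le) =
   (let r = poset_rank X le - 1 in (\<Sum>S\<in>Pow {1..r}. of_nat (flag_f X le S) * wS r S))"
proof -
  define r where "r = poset_rank X le - 1"
  have "Theta (ab_index X le) = (\<Sum>S\<leftarrow>map set (subseqs [1..<r+1]). of_nat (flag_f X le S) * wS r S)"
    unfolding ab_index_def Let_def r_def[symmetric] Theta_Th Th_concat
    by (simp add: Th_scale Theta_vS[unfolded Theta_Th] o_def)
  also have "\<dots> = (\<Sum>S\<in>set (map set (subseqs [1..<r+1])). of_nat (flag_f X le S) * wS r S)"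
    by (rule sum_list_distinct_conv_sum_set) (rule distinct_set_subseqs, simp)
  also have "set (map set (subseqs [1..<r+1])) = Pow {1..r}"
    using subseqs_powset[of "[1..<r+1]"] by auto
  finally show ?thesis unfolding r_def Let_def .
qed



definition E :: "nat \<Rightarrow> int fps" where
  "E i = Abs_fps (\<lambda>n. if 0 < n \<and> i dvd n then 1 else 0)"

lemma E_rec: assumes "0 < i" shows "E i = fps_X ^ i * (1 + E i)"
proof (rule fps_ext)
  fix n
  show "E i $ n = (fps_X ^ i * (1 + E i)) $ n"
  proof (cases "n < i")
    case True
    hence "\<not> (0 < n \<and> i dvd n)" using dvd_imp_le by auto
    thus ?thesis using True by (simp add: fps_X_power_mult_nth E_def)
  next
    case False
    show ?thesis
    proof (cases "n = i")
      case True thus ?thesis using assms by (simp add: fps_X_power_mult_nth E_def)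
    next
      case False
      hence "n - i > 0" using \<open>\<not> n < i\<close> by simp
      moreover have "i dvd n \<longleftrightarrow> i dvd (n - i)" using \<open>\<not> n < i\<close>
        by (metis dvd_minus_self le_add_diff_inverse2 not_less)
      ultimately show ?thesis using \<open>\<not> n < i\<close> assms by (simp add: fps_X_power_mult_nth E_def)
    qed
  qed
qed

lemma E_mult: assumes "0 < i" shows "(1 - fps_X ^ i) * E i = fps_X ^ i"
proof -
  have "E i = fps_X ^ i + fps_X ^ i * E i" using E_rec[OF assms] by (simp add: algebra_simps)
  thus ?thesis by (simp add: algebra_simps)
qed

definition Amp :: "nat \<Rightarrow> int fps" where
  "Amp m = (\<Prod>i\<in>{1..m}. 1 - fps_X ^ i)"

lemma wS_fps:
  assumes "S \<subseteq> {1..r}"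
  shows "fps_of_poly (wS r S) = Amp r * (\<Prod>i\<in>S. E i)"
proof -
  have fv: "fps_of_poly (val S i) = (if i \<in> S then fps_X ^ i else 1 - fps_X ^ i)" for i
    by (simp add: val_def fps_of_poly_diff fps_of_poly_monom')
  have "fps_of_poly (wS r S) = (\<Prod>i\<in>{1..r}. (if i \<in> S then fps_X ^ i else 1 - fps_X ^ i))"
    unfolding wS_def fps_of_poly_prod fv ..
  also have "\<dots> = (\<Prod>i\<in>{1..r} - S. (if i \<in> S then fps_X ^ i else 1 - fps_X ^ i)) *
                  (\<Prod>i\<in>S. (if i \<in> S then fps_X ^ i else 1 - fps_X ^ i))"
    by (rule prod.subset_diff[OF assms]) simp
  also have "\<dots> = (\<Prod>i\<in>{1..r} - S. 1 - fps_X ^ i) * (\<Prod>i\<in>S. fps_X ^ i)"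
    by (intro arg_cong2[where f="(*)"] prod.cong) auto
  also have "(\<Prod>i\<in>S. fps_X ^ i) = (\<Prod>i\<in>S. (1 - fps_X ^ i) * E i)"
    using assms by (intro prod.cong) (auto simp: E_mult)
  also have "\<dots> = (\<Prod>i\<in>S. (1 - fps_X ^ i)) * (\<Prod>i\<in>S. E i)"
    by (rule prod.distrib)
  also have "Amp r = (\<Prod>i\<in>{1..r} - S. 1 - fps_X ^ i) * (\<Prod>i\<in>S. (1 - fps_X ^ i))"
    unfolding Amp_def by (rule prod.subset_diff[OF assms]) simp
  ultimately show ?thesis by (simp add: algebra_simps)
qed

context fpo
begin

definition "Ch D = {C. C \<subseteq> D - {bt} \<and> is_chain C le}"
definition "PC C = (\<Prod>c\<in>C. E (rk c))"
definition "Fc D = (\<Sum>C\<in>Ch D. PC C)"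
definition "Mch D L = {xs. length xs = L \<and> set xs \<subseteq> D \<and> sorted_wrt (\<lambda>a b. le b a) xs}"
definition "Zp D L = (\<Sum>xs\<in>Mch D L. monom (1::int) (sum_list (map rk xs)))"
definition "dcl D \<longleftrightarrow> D \<subseteq> X \<and> bt \<in> D \<and> (\<forall>x\<in>D. down x \<subseteq> D)"

lemma fin_Ch: "D \<subseteq> X \<Longrightarrow> finite (Ch D)"
  unfolding Ch_def by (rule finite_subset[of _ "Pow X"]) (auto simp: fin)

lemma fin_Mch: "D \<subseteq> X \<Longrightarrow> finite (Mch D L)"
  unfolding Mch_def
  by (rule finite_subset[OF _ finite_lists_length_eq[OF fin, of L]]) auto

lemma Theta_G:
  assumes "poset_rank X le = m + 1"
  shows "fps_of_poly (Theta (ab_index X le)) = Amp m * Fc (X - {tp})"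
proof -
  have rt: "rk tp = m + 1" using assms unfolding poset_rank_def tp_def by simp
  let ?Ch = "Ch (X - {tp})"
  have finCh: "finite ?Ch" by (rule fin_Ch) auto
  have ChX: "C \<subseteq> X" "is_chain C le" "bt \<notin> C" "tp \<notin> C" if "C \<in> ?Ch" for C
    using that unfolding Ch_def by auto
  have rkC: "rk ` C \<in> Pow {1..m}" if "C \<in> ?Ch" for C
  proof -
    { fix c assume "c \<in> C"
      hence "c \<in> X" "c \<noteq> bt" "c \<noteq> tp" using ChX[OF that] by auto
      hence "1 \<le> rk c" "rk c \<le> m" using rk_pos rk_lt_top rt by fastforce+ }
    thus ?thesis by auto
  qed
  have ff: "flag_f X le S = card {C \<in> ?Ch. rk ` C = S}" for S
  proof -
    have "{C. C \<subseteq> X - {pbot X le, ptop X le} \<and> is_chain C le \<and> inj_on rk C \<and> rk ` C = S}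
        = {C \<in> ?Ch. rk ` C = S}"
    proof (intro set_eqI iffI)
      fix C assume "C \<in> {C. C \<subseteq> X - {pbot X le, ptop X le} \<and> is_chain C le \<and> inj_on rk C \<and> rk ` C = S}"
      thus "C \<in> {C \<in> ?Ch. rk ` C = S}" unfolding Ch_def bt_def tp_def by auto
    next
      fix C assume C: "C \<in> {C \<in> ?Ch. rk ` C = S}"
      hence "inj_on rk C" using ChX chain_inj by auto
      thus "C \<in> {C. C \<subseteq> X - {pbot X le, ptop X le} \<and> is_chain C le \<and> inj_on rk C \<and> rk ` C = S}"
        using C unfolding Ch_def bt_def tp_def by auto
    qed
    thus ?thesis unfolding flag_f_def by simp
  qed
  have "Theta (ab_index X le) = (\<Sum>S\<in>Pow {1..m}. of_nat (card {C \<in> ?Ch. rk ` C = S}) * wS m S)"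
    using Theta_ab_index[of X le] assms by (simp add: ff)
  also have "\<dots> = (\<Sum>S\<in>Pow {1..m}. (\<Sum>C\<in>{C \<in> ?Ch. rk ` C = S}. wS m (rk ` C)))"
    by (intro sum.cong) auto
  also have "\<dots> = (\<Sum>C\<in>?Ch. wS m (rk ` C))"
    by (rule sum.group) (use finCh rkC in auto)
  finally have th: "Theta (ab_index X le) = (\<Sum>C\<in>?Ch. wS m (rk ` C))" .
  have "fps_of_poly (Theta (ab_index X le)) = (\<Sum>C\<in>?Ch. fps_of_poly (wS m (rk ` C)))"
    unfolding th fps_of_poly_sum ..
  also have "\<dots> = (\<Sum>C\<in>?Ch. Amp m * PC C)"
  proof (intro sum.cong refl)
    fix C assume C: "C \<in> ?Ch"
    have "fps_of_poly (wS m (rk ` C)) = Amp m * (\<Prod>i\<in>rk ` C. E i)"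
      using rkC[OF C] by (intro wS_fps) auto
    also have "(\<Prod>i\<in>rk ` C. E i) = PC C"
      unfolding PC_def using chain_inj[OF ChX(1,2)[OF C]] by (simp add: prod.reindex)
    finally show "fps_of_poly (wS m (rk ` C)) = Amp m * PC C" .
  qed
  also have "\<dots> = Amp m * Fc (X - {tp})"
    unfolding Fc_def by (simp add: sum_distrib_left)
  finally show ?thesis .
qed

end


context fpo begin

lemma dcl_down: assumes "x \<in> X" shows "dcl (down x)"
proof -
  have "down y \<subseteq> down x" if "y \<in> down x" for y
  proof
    fix z assume "z \<in> down y"
    thus "z \<in> down x" using that assms trn[of z y x] unfolding down_def by auto
  qed
  thus ?thesis unfolding dcl_def using bt assms down_sub unfolding down_def by auto
qed

lemma dcl_top: assumes "bt \<noteq> tp" shows "dcl (X - {tp})"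
proof -
  have "down x \<subseteq> X - {tp}" if "x \<in> X - {tp}" for x
  proof
    fix y assume y: "y \<in> down x"
    have "y \<noteq> tp"
    proof
      assume "y = tp"
      hence "le tp x" using y unfolding down_def by auto
      hence "x = tp" using antisym[of x tp] tp that by auto
      thus False using that by auto
    qed
    thus "y \<in> X - {tp}" using y unfolding down_def by auto
  qed
  thus ?thesis unfolding dcl_def using assms bt by auto
qed

lemma down_bt: "down bt = {bt}"
proof (intro set_eqI iffI)
  fix y assume "y \<in> down bt"
  hence "y \<in> X" "le y bt" unfolding down_def by auto
  thus "y \<in> {bt}" using antisym[of y bt] bt by auto
next
  fix y assume "y \<in> {bt}" thus "y \<in> down bt" using bt rfl unfolding down_def by auto
qed

lemma Zp_0: "Zp D 0 = 1"
proof -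
  have "Mch D 0 = {[]}" unfolding Mch_def by auto
  thus ?thesis unfolding Zp_def by simp
qed

lemma Mch_Suc:
  assumes D: "dcl D"
  shows "Mch D (Suc L) = (\<Union>x\<in>D. (Cons x) ` Mch (down x) L)"
proof (intro set_eqI iffI)
  fix zs assume zs: "zs \<in> Mch D (Suc L)"
  then obtain x xs where eq: "zs = x # xs" unfolding Mch_def by (cases zs) auto
  have x: "x \<in> D" "length xs = L" "set xs \<subseteq> D" "\<forall>y\<in>set xs. le y x"
      "sorted_wrt (\<lambda>a b. le b a) xs"
    using zs eq unfolding Mch_def by auto
  have "set xs \<subseteq> down x" using x(3,4) D unfolding down_def dcl_def by auto
  hence "xs \<in> Mch (down x) L" using x unfolding Mch_def by auto
  thus "zs \<in> (\<Union>x\<in>D. (Cons x) ` Mch (down x) L)" using eq x(1) by auto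
next
  fix zs assume "zs \<in> (\<Union>x\<in>D. (Cons x) ` Mch (down x) L)"
  then obtain x xs where x: "x \<in> D" "xs \<in> Mch (down x) L" "zs = x # xs" by auto
  have "down x \<subseteq> D" using D x(1) unfolding dcl_def by auto
  hence "set xs \<subseteq> D" using x(2) unfolding Mch_def by auto
  moreover have "\<forall>y\<in>set xs. le y x" using x(2) unfolding Mch_def down_def by auto
  ultimately show "zs \<in> Mch D (Suc L)" using x unfolding Mch_def by auto
qed

lemma Zp_Suc:
  assumes D: "dcl D"
  shows "Zp D (Suc L) = (\<Sum>x\<in>D. monom 1 (rk x) * Zp (down x) L)"
proof -
  have DX: "D \<subseteq> X" using D unfolding dcl_def by auto
  hence finD: "finite D" using fin finite_subset by auto
  let ?f = "\<lambda>xs. monom (1::int) (sum_list (map rk xs))"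
  have "Zp D (Suc L) = (\<Sum>zs\<in>(\<Union>x\<in>D. (Cons x) ` Mch (down x) L). ?f zs)"
    unfolding Zp_def Mch_Suc[OF D] ..
  also have "\<dots> = (\<Sum>x\<in>D. (\<Sum>zs\<in>(Cons x) ` Mch (down x) L. ?f zs))"
    by (rule sum.UNION_disjoint) (auto simp: finD fin_Mch down_sub)
  also have "\<dots> = (\<Sum>x\<in>D. (\<Sum>xs\<in>Mch (down x) L. ?f (x # xs)))"
    by (rule sum.cong[OF refl]) (simp add: sum.reindex)
  also have "\<dots> = (\<Sum>x\<in>D. monom 1 (rk x) * Zp (down x) L)"
    unfolding Zp_def by (simp add: sum_distrib_left mult_monom)
  finally show ?thesis .
qed

lemma Zp_bt: "Zp (down bt) L = 1"
proof -
  have "Mch (down bt) L = {replicate L bt}"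
  proof (intro set_eqI iffI)
    fix xs assume "xs \<in> Mch (down bt) L"
    hence "length xs = L" "\<forall>y\<in>set xs. y = bt" unfolding Mch_def down_bt by auto
    thus "xs \<in> {replicate L bt}" using replicate_length_same[of xs bt] by auto
  next
    fix xs assume "xs \<in> {replicate L bt}"
    moreover have "sorted_wrt (\<lambda>a b. le b a) (replicate L bt)"
      unfolding sorted_wrt_iff_nth_less using bt rfl by auto
    ultimately show "xs \<in> Mch (down bt) L" unfolding Mch_def down_bt by auto
  qed
  thus ?thesis unfolding Zp_def by (simp add: rk_bot sum_list_replicate)
qed

definition "Chp x = {C \<in> Ch (down x). x \<notin> C}"

lemma Ch_fin: assumes "D \<subseteq> X" "C \<in> Ch D" shows "finite C"
proof -
  have "C \<subseteq> X" using assms unfolding Ch_def by auto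
  thus ?thesis using finite_subset fin by auto
qed

lemma Ch_split:
  assumes D: "dcl D"
  shows "Ch D = insert {} (\<Union>x\<in>D-{bt}. insert x ` Chp x)"
proof (intro set_eqI iffI)
  fix C assume C: "C \<in> Ch D"
  have DX: "D \<subseteq> X" using D unfolding dcl_def by auto
  show "C \<in> insert {} (\<Union>x\<in>D-{bt}. insert x ` Chp x)"
  proof (cases "C = {}")
    case True thus ?thesis by simp
  next
    case False
    have CX: "C \<subseteq> X" "is_chain C le" "C \<subseteq> D - {bt}" using C DX unfolding Ch_def by auto
    obtain x where x: "x \<in> C" "\<forall>y\<in>C. le y x"
      using chain_max[OF Ch_fin[OF DX C] False CX(1,2)] by auto
    have "C - {x} \<subseteq> down x - {bt}" using x CX unfolding down_def by auto
    moreover have "is_chain (C - {x}) le" using CX(2) unfolding is_chain_def by auto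
    ultimately have "C - {x} \<in> Chp x" unfolding Chp_def Ch_def by auto
    moreover have "C = insert x (C - {x})" using x by auto
    moreover have "x \<in> D - {bt}" using x CX by auto
    ultimately show ?thesis by blast
  qed
next
  fix C assume "C \<in> insert {} (\<Union>x\<in>D-{bt}. insert x ` Chp x)"
  thus "C \<in> Ch D"
  proof
    assume "C = {}" thus ?thesis unfolding Ch_def is_chain_def by auto
  next
    assume "C \<in> (\<Union>x\<in>D-{bt}. insert x ` Chp x)"
    then obtain x C' where x: "x \<in> D - {bt}" "C' \<in> Chp x" "C = insert x C'" by auto
    have dx: "down x \<subseteq> D" using D x(1) unfolding dcl_def by auto
    have C': "C' \<subseteq> down x - {bt}" "is_chain C' le" using x(2) unfolding Chp_def Ch_def by auto
    have "C \<subseteq> D - {bt}" using x(1,3) C' dx by auto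
    moreover have "\<forall>y\<in>C'. le y x" using C' unfolding down_def by auto
    hence "is_chain C le" using C'(2) x D rfl unfolding is_chain_def dcl_def by auto
    ultimately show ?thesis unfolding Ch_def by auto
  qed
qed

lemma inj_insert: "inj_on (insert x) {C. x \<notin> C}"
proof
  fix A B assume "A \<in> {C. x \<notin> C}" "B \<in> {C. x \<notin> C}" "insert x A = insert x B"
  hence "insert x A - {x} = insert x B - {x}" "x \<notin> A" "x \<notin> B" by auto
  thus "A = B" by simp
qed

lemma Chp_sub: "Chp x \<subseteq> {C. x \<notin> C}" unfolding Chp_def by auto

lemma Fc_down:
  assumes x: "x \<in> X" "x \<noteq> bt"
  shows "Fc (down x) = (1 + E (rk x)) * (\<Sum>C\<in>Chp x. PC C)"
proof -
  have split: "Ch (down x) = Chp x \<union> insert x ` Chp x"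
  proof (intro set_eqI iffI)
    fix C assume C: "C \<in> Ch (down x)"
    show "C \<in> Chp x \<union> insert x ` Chp x"
    proof (cases "x \<in> C")
      case False thus ?thesis using C unfolding Chp_def by auto
    next
      case True
      have "C - {x} \<in> Chp x" using C unfolding Chp_def Ch_def is_chain_def by auto
      moreover have "C = insert x (C - {x})" using True by auto
      ultimately show ?thesis by blast
    qed
  next
    fix C assume "C \<in> Chp x \<union> insert x ` Chp x"
    thus "C \<in> Ch (down x)"
    proof
      assume "C \<in> Chp x" thus ?thesis unfolding Chp_def by auto
    next
      assume "C \<in> insert x ` Chp x"
      then obtain C' where C': "C' \<in> Chp x" "C = insert x C'" by auto
      have c: "C' \<subseteq> down x - {bt}" "is_chain C' le" using C'(1) unfolding Chp_def Ch_def by auto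
      have "x \<in> down x" using x rfl unfolding down_def by auto
      moreover have "\<forall>y\<in>C'. le y x" using c unfolding down_def by auto
      ultimately show ?thesis using c C'(2) x rfl unfolding Ch_def is_chain_def by auto
    qed
  qed
  have finChp: "finite (Chp x)" using fin_Ch[OF down_sub] unfolding Chp_def by auto
  have "Fc (down x) = (\<Sum>C\<in>Chp x. PC C) + (\<Sum>C\<in>insert x ` Chp x. PC C)"
    unfolding Fc_def split
    by (rule sum.union_disjoint) (use finChp in \<open>auto simp: Chp_def\<close>)
  also have "(\<Sum>C\<in>insert x ` Chp x. PC C) = (\<Sum>C\<in>Chp x. PC (insert x C))"
    by (rule sum.reindex_cong[OF inj_on_subset[OF inj_insert Chp_sub] refl refl])
  also have "\<dots> = (\<Sum>C\<in>Chp x. E (rk x) * PC C)"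
  proof (intro sum.cong refl)
    fix C assume C: "C \<in> Chp x"
    have "finite C" using C Ch_fin[OF down_sub] unfolding Chp_def by auto
    thus "PC (insert x C) = E (rk x) * PC C" using C unfolding PC_def Chp_def by simp
  qed
  finally have "Fc (down x) = (\<Sum>C\<in>Chp x. PC C) + (\<Sum>C\<in>Chp x. E (rk x) * PC C)" .
  thus ?thesis by (simp only: distrib_right mult_1_left sum_distrib_left sum.distrib)
qed

lemma Fc_rec:
  assumes D: "dcl D"
  shows "Fc D = 1 + (\<Sum>x\<in>D-{bt}. fps_X ^ rk x * Fc (down x))"
proof -
  have DX: "D \<subseteq> X" using D unfolding dcl_def by auto
  hence finD: "finite D" using fin finite_subset by auto
  have finChp: "finite (Chp x)" for x using fin_Ch[OF down_sub] unfolding Chp_def by auto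
  have ne: "{} \<notin> (\<Union>x\<in>D-{bt}. insert x ` Chp x)" by auto
  have "Fc D = PC {} + (\<Sum>C\<in>(\<Union>x\<in>D-{bt}. insert x ` Chp x). PC C)"
    unfolding Fc_def Ch_split[OF D]
    by (rule sum.insert[OF _ ne]) (auto simp: finD finChp)
  also have "(\<Sum>C\<in>(\<Union>x\<in>D-{bt}. insert x ` Chp x). PC C) = (\<Sum>x\<in>D-{bt}. (\<Sum>C\<in>insert x ` Chp x. PC C))"
  proof (rule sum.UNION_disjoint)
    show "finite (D - {bt})" using finD by auto
    show "\<forall>x\<in>D - {bt}. finite (insert x ` Chp x)" using finChp by auto
    show "\<forall>x\<in>D - {bt}. \<forall>y\<in>D - {bt}. x \<noteq> y \<longrightarrow> insert x ` Chp x \<inter> insert y ` Chp y = {}"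
    proof (intro ballI impI)
      fix x y assume xy: "x \<in> D - {bt}" "y \<in> D - {bt}" "x \<noteq> y"
      show "insert x ` Chp x \<inter> insert y ` Chp y = {}"
      proof (rule ccontr)
        assume "insert x ` Chp x \<inter> insert y ` Chp y \<noteq> {}"
        then obtain A B where AB: "A \<in> Chp x" "B \<in> Chp y" "insert x A = insert y B" by auto
        have "y \<in> insert x A" unfolding AB(3) by (rule insertI1)
        moreover have "x \<in> insert y B" unfolding AB(3)[symmetric] by (rule insertI1)
        ultimately have "y \<in> A" "x \<in> B" using xy(3) by simp_all
        hence "le y x" "le x y" using AB unfolding Chp_def Ch_def down_def by auto
        thus False using antisym[of x y] xy DX by auto
      qed
    qed
  qed
  also have "\<dots> = (\<Sum>x\<in>D-{bt}. fps_X ^ rk x * Fc (down x))"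
  proof (intro sum.cong refl)
    fix x assume x: "x \<in> D - {bt}"
    have xX: "x \<in> X" "x \<noteq> bt" using x DX by auto
    have "(\<Sum>C\<in>insert x ` Chp x. PC C) = (\<Sum>C\<in>Chp x. PC (insert x C))"
      by (rule sum.reindex_cong[OF inj_on_subset[OF inj_insert Chp_sub] refl refl])
    also have "\<dots> = (\<Sum>C\<in>Chp x. E (rk x) * PC C)"
    proof (intro sum.cong refl)
      fix C assume C: "C \<in> Chp x"
      have "finite C" using C Ch_fin[OF down_sub] unfolding Chp_def by auto
      thus "PC (insert x C) = E (rk x) * PC C" using C unfolding PC_def Chp_def by simp
    qed
    also have "\<dots> = E (rk x) * (\<Sum>C\<in>Chp x. PC C)" by (simp add: sum_distrib_left)
    also have "\<dots> = fps_X ^ rk x * ((1 + E (rk x)) * (\<Sum>C\<in>Chp x. PC C))"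
      using E_rec[OF rk_pos[OF xX]] by (metis mult.assoc)
    also have "\<dots> = fps_X ^ rk x * Fc (down x)" using Fc_down[OF xX] by simp
    finally show "(\<Sum>C\<in>insert x ` Chp x. PC C) = fps_X ^ rk x * Fc (down x)" .
  qed
  finally show ?thesis by (simp add: PC_def)
qed

lemma coeff_Zp:
  assumes "dcl D" "N \<le> L"
  shows "coeff (Zp D L) N = Fc D $ N"
  using assms
proof (induction L arbitrary: D N)
  case 0
  have DX: "D \<subseteq> X" using 0 unfolding dcl_def by auto
  have "Fc D $ 0 = 1"
  proof -
    have "(\<Sum>x\<in>D-{bt}. fps_X ^ rk x * Fc (down x)) $ 0 = (\<Sum>x\<in>D-{bt}. (fps_X ^ rk x * Fc (down x)) $ 0)"
      by (rule fps_sum_nth)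
    also have "\<dots> = 0"
    proof (rule sum.neutral, rule ballI)
      fix x assume "x \<in> D - {bt}"
      hence "0 < rk x" using rk_pos DX by auto
      thus "(fps_X ^ rk x * Fc (down x)) $ 0 = 0" by (simp add: fps_X_power_mult_nth)
    qed
    finally show ?thesis unfolding Fc_rec[OF 0(1)] by simp
  qed
  thus ?case using 0 by (simp add: Zp_0)
next
  case (Suc L)
  have D: "dcl D" using Suc by auto
  have DX: "D \<subseteq> X" and btD: "bt \<in> D" using D unfolding dcl_def by auto
  have finD: "finite D" using DX fin finite_subset by auto
  have "coeff (Zp D (Suc L)) N = (\<Sum>x\<in>D. coeff (monom 1 (rk x) * Zp (down x) L) N)"
    unfolding Zp_Suc[OF D] coeff_sum ..
  also have "\<dots> = coeff (monom 1 (rk bt) * Zp (down bt) L) N +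
       (\<Sum>x\<in>D-{bt}. coeff (monom 1 (rk x) * Zp (down x) L) N)"
    using finD btD by (subst sum.remove[of D bt]) auto
  also have "coeff (monom 1 (rk bt) * Zp (down bt) L) N = (if N = 0 then 1 else 0)"
    by (simp add: rk_bot Zp_bt)
  also have "(\<Sum>x\<in>D-{bt}. coeff (monom 1 (rk x) * Zp (down x) L) N)
     = (\<Sum>x\<in>D-{bt}. (fps_X ^ rk x * Fc (down x)) $ N)"
  proof (intro sum.cong refl)
    fix x assume x: "x \<in> D - {bt}"
    have pos: "0 < rk x" using rk_pos x DX by auto
    show "coeff (monom 1 (rk x) * Zp (down x) L) N = (fps_X ^ rk x * Fc (down x)) $ N"
    proof (cases "N < rk x")
      case True thus ?thesis by (simp add: coeff_monom_mult fps_X_power_mult_nth)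
    next
      case False
      have "N - rk x \<le> L" using False pos Suc.prems(2) by linarith
      hence "coeff (Zp (down x) L) (N - rk x) = Fc (down x) $ (N - rk x)"
        using Suc.IH[OF dcl_down] x DX by auto
      thus ?thesis using False by (simp add: coeff_monom_mult fps_X_power_mult_nth)
    qed
  qed
  also have "(if N = 0 then 1 else 0) + (\<Sum>x\<in>D-{bt}. (fps_X ^ rk x * Fc (down x)) $ N) = Fc D $ N"
    unfolding Fc_rec[OF D] by (simp add: fps_sum_nth)
  finally show ?case .
qed

end


fun qb :: "nat \<Rightarrow> nat \<Rightarrow> int poly" where
  "qb 0 n = 1"
| "qb (Suc m) 0 = 1"
| "qb (Suc m) (Suc n) = qb (Suc m) n + monom 1 (Suc n) * qb m (Suc n)"

lemma qint_Suc: "qint (Suc k) = qint k + monom 1 k"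
  unfolding qint_def by simp

lemma qint_add: "qint a + monom 1 a * qint b = qint (a + b)"
proof (induction b)
  case 0 thus ?case by (simp add: qint_def)
next
  case (Suc b)
  have "qint a + monom 1 a * qint (Suc b) = (qint a + monom 1 a * qint b) + monom 1 a * monom 1 b"
    by (simp add: qint_Suc algebra_simps)
  also have "\<dots> = qint (a + b) + monom 1 (a + b)" by (simp add: Suc.IH mult_monom)
  also have "\<dots> = qint (a + Suc b)" by (simp add: qint_Suc)
  finally show ?case .
qed

lemma qfact_Suc: "qfact (Suc k) = qfact k * qint (Suc k)"
  unfolding qfact_def by (simp add: prod.nat_ivl_Suc' mult.commute)

lemma qfact_0: "qfact 0 = 1" unfolding qfact_def by simp

lemma qb_prop: "qb m n * qfact m * qfact n = qfact (m + n)"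
proof (induction m n rule: qb.induct)
  case (1 n) thus ?case by (simp add: qfact_0)
next
  case (2 m) thus ?case by (simp add: qfact_0)
next
  case (3 m n)
  have "qb (Suc m) (Suc n) * qfact (Suc m) * qfact (Suc n)
     = (qb (Suc m) n * qfact (Suc m) * qfact n) * qint (Suc n)
       + monom 1 (Suc n) * (qb m (Suc n) * qfact m * qfact (Suc n)) * qint (Suc m)"
    by (simp add: qfact_Suc algebra_simps)
  also have "\<dots> = qfact (Suc (m + n)) * (qint (Suc n) + monom 1 (Suc n) * qint (Suc m))"
    using 3 by (simp add: algebra_simps)
  also have "qint (Suc n) + monom 1 (Suc n) * qint (Suc m) = qint (Suc (Suc (m + n)))"
    using qint_add[of "Suc n" "Suc m"] by (simp add: add.commute)
  finally show ?case by (simp add: qfact_Suc)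
qed

lemma qint_nz: "0 < k \<Longrightarrow> qint k \<noteq> 0"
proof -
  assume "0 < k"
  hence "coeff (qint k) 0 = 1" unfolding qint_def by (simp add: coeff_sum)
  thus "qint k \<noteq> 0" by auto
qed

lemma qfact_nz: "qfact k \<noteq> 0"
  unfolding qfact_def using qint_nz by (simp add: prod_zero_iff)

lemma qbinom_eq: "qbinom (m + n) n = qb m n"
proof -
  have "qbinom (m + n) n = qfact (m + n) div (qfact n * qfact m)"
    unfolding qbinom_def by simp
  also have "qfact (m + n) = qb m n * (qfact n * qfact m)"
    using qb_prop[of m n] by (simp add: algebra_simps)
  finally show ?thesis using qfact_nz by simp
qed

definition AmpP :: "nat \<Rightarrow> int poly" where
  "AmpP k = (\<Prod>i\<in>{1..k}. 1 - monom 1 i)"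

lemma one_minus_monom: "1 - monom (1::int) i = (1 - monom 1 1) * qint i"
proof (induction i)
  case 0 thus ?case by (simp add: qint_def)
next
  case (Suc i)
  have "(1 - monom 1 1) * qint (Suc i) = (1 - monom 1 1) * qint i + (1 - monom (1::int) 1) * monom 1 i"
    by (simp add: qint_Suc algebra_simps)
  also have "\<dots> = 1 - monom 1 (Suc i)"
    using Suc.IH[symmetric] by (simp add: algebra_simps mult_monom)
  finally show ?case by simp
qed

lemma AmpP_eq: "AmpP k = (1 - monom 1 1) ^ k * qfact k"
proof -
  have "AmpP k = (\<Prod>i\<in>{1..k}. (1 - monom 1 1) * qint i)"
    unfolding AmpP_def by (rule prod.cong[OF refl]) (rule one_minus_monom)
  also have "\<dots> = (\<Prod>i\<in>{1..k}. (1 - monom 1 1)) * qfact k"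
    unfolding qfact_def by (rule prod.distrib)
  finally show ?thesis by simp
qed

lemma final_alg:
  fixes GR GP GQ :: "int poly"
  assumes "GR * AmpP m * AmpP n = AmpP (m + n) * GP * GQ"
  shows "GR = qbinom (m + n) n * GP * GQ"
proof -
  have nz: "(1 - monom (1::int) 1) ^ (m + n) \<noteq> 0"
  proof -
    have "coeff (1 - monom (1::int) 1) 0 = 1" by simp
    hence "1 - monom (1::int) 1 \<noteq> 0" by (metis coeff_0 zero_neq_one)
    thus ?thesis by simp
  qed
  have "(1 - monom 1 1) ^ (m + n) * (GR * (qfact m * qfact n)) = (1 - monom 1 1) ^ (m + n) * (qfact (m + n) * GP * GQ)"
    using assms unfolding AmpP_eq by (simp add: power_add algebra_simps)
  hence "GR * (qfact m * qfact n) = qfact (m + n) * GP * GQ" by (simp only: mult_left_cancel[OF nz])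
  also have "qfact (m + n) = qb m n * (qfact m * qfact n)" using qb_prop[of m n] by (simp add: algebra_simps)
  finally have "GR * (qfact m * qfact n) = (qb m n * GP * GQ) * (qfact m * qfact n)" by (simp add: algebra_simps)
  moreover have "qfact m * qfact n \<noteq> 0" using qfact_nz by simp
  ultimately have "GR = qb m n * GP * GQ" using mult_right_cancel by metis
  thus ?thesis using qbinom_eq by simp
qed



context fpo begin

lemma rank_m_elem:
  assumes "rk tp = m + 1"
  shows "\<exists>a\<in>X. a \<noteq> tp \<and> rk a = m"
proof -
  obtain C where C: "C \<subseteq> down tp" "is_chain C le" "card C = rk tp + 1"
    using rk_props(1)[OF tp(1)] by auto
  have finC: "finite C" using finite_subset[OF C(1) finite_subset[OF down_sub fin]] .
  let ?C = "C - {tp}"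
  have cardC: "card ?C \<ge> m + 1" using C(3) assms finC by (simp add: card_Diff_singleton_if)
  have ne: "?C \<noteq> {}"
  proof
    assume "?C = {}" hence "card ?C = 0" by (simp only: card.empty)
    thus False using cardC by simp
  qed
  have CX: "?C \<subseteq> X" "is_chain ?C le" using C(1,2) down_sub[of tp] unfolding is_chain_def by auto
  obtain x where x: "x \<in> ?C" "\<forall>y\<in>?C. le y x" using chain_max[OF _ ne CX] finC by auto
  have "?C \<subseteq> down x" using x CX unfolding down_def by auto
  hence "card ?C \<le> rk x + 1" using rk_props(2)[of x ?C] CX x by auto
  moreover have "rk x < rk tp" using rk_lt_top[of x] x CX by auto
  ultimately have "rk x = m" using cardC assms by linarith
  thus ?thesis using x CX by auto
qed

lemma bt_ne_tp: assumes "poset_rank X le = m + 1" shows "bt \<noteq> tp"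
  using assms rk_bot unfolding poset_rank_def tp_def by auto

lemma main_gen:
  assumes "poset_rank X le = m + 1"
  shows "fps_of_poly (Theta (ab_index X le)) = Amp m * Fc (X - {tp})"
    and "\<And>N L. N \<le> L \<Longrightarrow> Fc (X - {tp}) $ N = coeff (Zp (X - {tp}) L) N"
  using Theta_G[OF assms] coeff_Zp[OF dcl_top[OF bt_ne_tp[OF assms]]] by auto

end

lemma Amp_fps: "fps_of_poly (AmpP k) = Amp k"
  unfolding AmpP_def Amp_def fps_of_poly_prod by (simp add: fps_of_poly_diff fps_of_poly_monom')

locale dd = P: fpo X leX + Q: fpo Y leY
  for X :: "'a set" and leX and Y :: "'b set" and leY +
  fixes m n :: nat
  assumes rkX: "poset_rank X leX = m + 1" and rkY: "poset_rank Y leY = n + 1"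
begin

abbreviation "R \<equiv> dd_carrier X leX Y leY"
abbreviation "lR \<equiv> dd_le leX leY"

lemma R_eq: "R = insert None (Some ` ((X - {P.tp}) \<times> (Y - {Q.tp})))"
  unfolding dd_carrier_def P.tp_def Q.tp_def ..

lemma btP: "P.bt \<noteq> P.tp" using P.bt_ne_tp[OF rkX] .
lemma btQ: "Q.bt \<noteq> Q.tp" using Q.bt_ne_tp[OF rkY] .

lemma R_cases: assumes "z \<in> R" obtains "z = None"
  | a b where "z = Some (a, b)" "a \<in> X" "a \<noteq> P.tp" "b \<in> Y" "b \<noteq> Q.tp"
  using assms unfolding R_eq by auto

lemma R_fpo: "fpo R lR"
proof (rule fpo.intro)
  show "finite R" unfolding R_eq using P.fin Q.fin by auto
next
  fix x assume "x \<in> R" thus "lR x x"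
    by (cases rule: R_cases) (auto intro: P.rfl Q.rfl)
next
  fix x y assume xy: "x \<in> R" "y \<in> R" "lR x y" "lR y x"
  show "x = y"
  proof (cases rule: R_cases[OF xy(1)])
    case 1 thus ?thesis using xy by (cases rule: R_cases[OF xy(2)]) auto
  next
    case (2 a b) note x = this
    show ?thesis
    proof (cases rule: R_cases[OF xy(2)])
      case 1 thus ?thesis using xy x by auto
    next
      case (2 a' b')
      thus ?thesis using xy x P.antisym[of a a'] Q.antisym[of b b'] by auto
    qed
  qed
next
  fix x y z assume xyz: "x \<in> R" "y \<in> R" "z \<in> R" "lR x y" "lR y z"
  show "lR x z"
  proof (cases rule: R_cases[OF xyz(3)])
    case 1 thus ?thesis by simp
  next
    case (2 c d) note z = this
    show ?thesis
    proof (cases rule: R_cases[OF xyz(2)])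
      case 1 thus ?thesis using xyz z by auto
    next
      case (2 c' d') note y = this
      show ?thesis
      proof (cases rule: R_cases[OF xyz(1)])
        case 1 thus ?thesis using xyz y by auto
      next
        case (2 c'' d'')
        thus ?thesis using xyz y z P.trn[of c'' c' c] Q.trn[of d'' d' d] by auto
      qed
    qed
  qed
next
  show "\<exists>z\<in>R. \<forall>x\<in>R. lR z x"
  proof (intro bexI ballI)
    show "Some (P.bt, Q.bt) \<in> R" unfolding R_eq using P.bt Q.bt btP btQ by auto
    fix x assume "x \<in> R" thus "lR (Some (P.bt, Q.bt)) x"
      by (cases rule: R_cases) (auto intro: P.bt Q.bt)
  qed
next
  show "\<exists>t\<in>R. \<forall>x\<in>R. lR x t" by (intro bexI[of _ None]) (auto simp: R_eq)
qed

sublocale RR: fpo R lR by (rule R_fpo)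

lemma R_bt: "RR.bt = Some (P.bt, Q.bt)"
  unfolding RR.bt_def
proof (rule RR.bot_eq)
  show "Some (P.bt, Q.bt) \<in> R" unfolding R_eq using P.bt Q.bt btP btQ by auto
  show "\<forall>x\<in>R. lR (Some (P.bt, Q.bt)) x"
    by (intro ballI, erule R_cases) (auto intro: P.bt Q.bt)
qed

lemma R_tp: "RR.tp = None"
  unfolding RR.tp_def by (rule RR.top_eq) (auto simp: R_eq)

lemma rkP_le: "a \<in> X \<Longrightarrow> a \<noteq> P.tp \<Longrightarrow> P.rk a \<le> m"
  using P.rk_lt_top rkX unfolding poset_rank_def P.tp_def by fastforce
lemma rkQ_le: "b \<in> Y \<Longrightarrow> b \<noteq> Q.tp \<Longrightarrow> Q.rk b \<le> n"
  using Q.rk_lt_top rkY unfolding poset_rank_def Q.tp_def by fastforce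

definition "wt z = P.rk (fst (the z)) + Q.rk (snd (the z))"

lemma wt_inj:
  assumes "C \<subseteq> R - {None}" "is_chain C lR"
  shows "inj_on wt C"
proof
  fix z1 z2 assume z: "z1 \<in> C" "z2 \<in> C" "wt z1 = wt z2"
  have m1: "z1 \<in> R - {None}" by (rule subsetD[OF assms(1) z(1)])
  have m2: "z2 \<in> R - {None}" by (rule subsetD[OF assms(1) z(2)])
  obtain a1 b1 where e1: "z1 = Some (a1, b1)" "a1 \<in> X" "b1 \<in> Y"
    using m1 by (elim DiffE R_cases) auto
  obtain a2 b2 where e2: "z2 = Some (a2, b2)" "a2 \<in> X" "b2 \<in> Y"
    using m2 by (elim DiffE R_cases) auto
  note e = e1(1) e2(1) e1(2,3) e2(2,3)
  have w: "P.rk a1 + Q.rk b1 = P.rk a2 + Q.rk b2" using z(3) e unfolding wt_def by simp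
  have "lR z1 z2 \<or> lR z2 z1" using assms(2) z unfolding is_chain_def by auto
  hence "(leX a1 a2 \<and> leY b1 b2) \<or> (leX a2 a1 \<and> leY b2 b1)" using e by auto
  thus "z1 = z2"
  proof
    assume h: "leX a1 a2 \<and> leY b1 b2"
    have "P.rk a1 \<le> P.rk a2" "Q.rk b1 \<le> Q.rk b2" using h e P.rk_mono Q.rk_mono by auto
    hence "P.rk a1 = P.rk a2" "Q.rk b1 = Q.rk b2" using w by linarith+
    hence "a1 = a2" "b1 = b2" using h e P.rk_less[of a1 a2] Q.rk_less[of b1 b2] by fastforce+
    thus ?thesis using e by simp
  next
    assume h: "leX a2 a1 \<and> leY b2 b1"
    have "P.rk a2 \<le> P.rk a1" "Q.rk b2 \<le> Q.rk b1" using h e P.rk_mono Q.rk_mono by auto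
    hence "P.rk a1 = P.rk a2" "Q.rk b1 = Q.rk b2" using w by linarith+
    hence "a1 = a2" "b1 = b2" using h e P.rk_less[of a2 a1] Q.rk_less[of b2 b1] by fastforce+
    thus ?thesis using e by simp
  qed
qed

lemma card_chain_bound:
  assumes "C \<subseteq> R - {None}" "is_chain C lR" "\<forall>z\<in>C. wt z \<le> k"
  shows "card C \<le> k + 1"
proof -
  have "card C \<le> card {0..k}"
    by (rule card_inj_on_le[OF wt_inj[OF assms(1,2)]]) (use assms(3) in auto)
  thus ?thesis by simp
qed

lemma R_down:
  assumes "a \<in> X" "a \<noteq> P.tp" "b \<in> Y" "b \<noteq> Q.tp"
  shows "RR.down (Some (a, b)) = Some ` (P.down a \<times> Q.down b)"
proof (intro set_eqI iffI)
  fix z assume "z \<in> RR.down (Some (a, b))"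
  hence z: "z \<in> R" "lR z (Some (a, b))" unfolding RR.down_def by auto
  show "z \<in> Some ` (P.down a \<times> Q.down b)"
    by (cases rule: R_cases[OF z(1)]) (use z in \<open>auto simp: P.down_def Q.down_def\<close>)
next
  fix z assume "z \<in> Some ` (P.down a \<times> Q.down b)"
  then obtain c d where z: "z = Some (c, d)" "c \<in> X" "leX c a" "d \<in> Y" "leY d b"
    unfolding P.down_def Q.down_def by auto
  have "c \<noteq> P.tp"
  proof
    assume "c = P.tp" hence "a = P.tp" using P.antisym[of a P.tp] P.tp z assms by auto
    thus False using assms by auto
  qed
  moreover have "d \<noteq> Q.tp"
  proof
    assume "d = Q.tp" hence "b = Q.tp" using Q.antisym[of b Q.tp] Q.tp z assms by auto
    thus False using assms by auto
  qed
  ultimately show "z \<in> RR.down (Some (a, b))" using z unfolding RR.down_def by (auto simp: R_eq)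
qed

lemma rk_R:
  assumes "a \<in> X" "a \<noteq> P.tp" "b \<in> Y" "b \<noteq> Q.tp"
  shows "RR.rk (Some (a, b)) = P.rk a + Q.rk b"
proof -
  have SR: "Some (a, b) \<in> R" using assms unfolding R_eq by auto
  obtain Ca where Ca: "Ca \<subseteq> P.down a" "is_chain Ca leX" "card Ca = P.rk a + 1"
    using P.rk_props(1)[OF assms(1)] by auto
  obtain Cb where Cb: "Cb \<subseteq> Q.down b" "is_chain Cb leY" "card Cb = Q.rk b + 1"
    using Q.rk_props(1)[OF assms(3)] by auto
  have finCa: "finite Ca" using finite_subset[OF Ca(1) finite_subset[OF P.down_sub P.fin]] .
  have finCb: "finite Cb" using finite_subset[OF Cb(1) finite_subset[OF Q.down_sub Q.fin]] .
  define A where "A = Ca \<times> {Q.bt}"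
  define B where "B = {a} \<times> Cb"
  define C where "C = Some ` (A \<union> B)"
  have bd: "\<And>C. C \<subseteq> RR.down (Some (a, b)) \<Longrightarrow> is_chain C lR \<Longrightarrow> card C \<le> P.rk a + Q.rk b + 1"
  proof -
    fix C assume C: "C \<subseteq> RR.down (Some (a, b))" "is_chain C lR"
    have "C \<subseteq> R - {None}" using C(1) unfolding R_down[OF assms] using RR.down_sub[of "Some (a,b)"]
      R_down[OF assms] by auto
    moreover have "\<forall>z\<in>C. wt z \<le> P.rk a + Q.rk b"
    proof
      fix z assume "z \<in> C"
      then obtain c d where "z = Some (c, d)" "c \<in> P.down a" "d \<in> Q.down b"
        using C(1) unfolding R_down[OF assms] by auto
      thus "wt z \<le> P.rk a + Q.rk b" using P.rk_mono[of c a] Q.rk_mono[of d b] assms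
        unfolding wt_def P.down_def Q.down_def by auto
    qed
    ultimately show "card C \<le> P.rk a + Q.rk b + 1" using card_chain_bound C(2) by auto
  qed
  have Csub: "C \<subseteq> RR.down (Some (a, b))"
  proof -
    have "a \<in> P.down a" using assms P.rfl unfolding P.down_def by auto
    moreover have "Q.bt \<in> Q.down b" using assms Q.bt unfolding Q.down_def by auto
    ultimately have "A \<union> B \<subseteq> P.down a \<times> Q.down b" using Ca(1) Cb(1) unfolding A_def B_def by auto
    thus ?thesis unfolding C_def R_down[OF assms] by auto
  qed
  have caX: "\<forall>c\<in>Ca. c \<in> X \<and> leX c a" using Ca(1) unfolding P.down_def by auto
  have cbY: "\<forall>d\<in>Cb. d \<in> Y \<and> leY d b" using Cb(1) unfolding Q.down_def by auto
  have h1: "lR (Some p) (Some q) \<or> lR (Some q) (Some p)" if "p \<in> A" "q \<in> A" for p q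
  proof -
    obtain c d where pc: "p = (c, d)" by (cases p)
    obtain c' d' where qc: "q = (c', d')" by (cases q)
    have cc: "p = (c, Q.bt)" "q = (c', Q.bt)" "c \<in> Ca" "c' \<in> Ca"
      using that pc qc unfolding A_def by auto
    have "leX c c' \<or> leX c' c" using Ca(2) cc(3,4) unfolding is_chain_def by auto
    moreover have "leY Q.bt Q.bt" using Q.rfl Q.bt(1) by auto
    ultimately show ?thesis using cc by auto
  qed
  have h2: "lR (Some p) (Some q) \<or> lR (Some q) (Some p)" if "p \<in> B" "q \<in> B" for p q
  proof -
    obtain c d where pc: "p = (c, d)" by (cases p)
    obtain c' d' where qc: "q = (c', d')" by (cases q)
    have dd: "p = (a, d)" "q = (a, d')" "d \<in> Cb" "d' \<in> Cb"
      using that pc qc unfolding B_def by auto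
    have "leY d d' \<or> leY d' d" using Cb(2) dd(3,4) unfolding is_chain_def by auto
    moreover have "leX a a" using P.rfl assms(1) by auto
    ultimately show ?thesis using dd by auto
  qed
  have h3: "lR (Some p) (Some q)" if "p \<in> A" "q \<in> B" for p q
  proof -
    obtain c d0 where pc: "p = (c, d0)" by (cases p)
    obtain c' d where qc: "q = (c', d)" by (cases q)
    have cd: "p = (c, Q.bt)" "q = (a, d)" "c \<in> Ca" "d \<in> Cb"
      using that pc qc unfolding A_def B_def by auto
    have "leX c a" using caX cd by auto
    moreover have "leY Q.bt d" using cbY cd Q.bt by auto
    ultimately show ?thesis using cd by auto
  qed
  have Cch: "is_chain C lR"
    unfolding is_chain_def
  proof (intro ballI)
    fix u v assume uv: "u \<in> C" "v \<in> C"
    then obtain p q where pq: "u = Some p" "v = Some q" "p \<in> A \<union> B" "q \<in> A \<union> B"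
      unfolding C_def by auto
    show "lR u v \<or> lR v u"
    proof (cases "p \<in> A")
      case True
      show ?thesis
      proof (cases "q \<in> A")
        case True thus ?thesis using h1 \<open>p \<in> A\<close> pq by auto
      next
        case False hence "q \<in> B" using pq by auto
        thus ?thesis using h3 \<open>p \<in> A\<close> pq by auto
      qed
    next
      case False hence pB: "p \<in> B" using pq by auto
      show ?thesis
      proof (cases "q \<in> A")
        case True thus ?thesis using h3 pB pq by auto
      next
        case False hence "q \<in> B" using pq by auto
        thus ?thesis using h2 pB pq by auto
      qed
    qed
  qed
  have "card C = card (A \<union> B)" unfolding C_def by (rule card_image) simp
  moreover have "card A + card B = card (A \<union> B) + card (A \<inter> B)"
    by (rule card_Un_Int) (auto simp: A_def B_def finCa finCb)
  moreover have "card A = P.rk a + 1" unfolding A_def using Ca(3) by (simp add: card_cartesian_product)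
  moreover have "card B = Q.rk b + 1" unfolding B_def using Cb(3) by (simp add: card_cartesian_product)
  moreover have "card (A \<inter> B) \<le> 1"
  proof -
    have "A \<inter> B \<subseteq> {(a, Q.bt)}" unfolding A_def B_def by auto
    thus ?thesis using card_mono[of "{(a, Q.bt)}" "A \<inter> B"] by simp
  qed
  ultimately have "card C \<ge> P.rk a + Q.rk b + 1" by linarith
  hence "card C = P.rk a + Q.rk b + 1" using bd[OF Csub Cch] by linarith
  thus ?thesis by (rule RR.rk_eqI[OF SR Csub Cch _ bd])
qed

lemma rank_R: "poset_rank R lR = m + n + 1"
proof -
  have tpP: "P.rk P.tp = m + 1" using rkX unfolding poset_rank_def P.tp_def by simp
  have tpQ: "Q.rk Q.tp = n + 1" using rkY unfolding poset_rank_def Q.tp_def by simp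
  obtain a where a: "a \<in> X" "a \<noteq> P.tp" "P.rk a = m" using P.rank_m_elem[OF tpP] by auto
  obtain b where b: "b \<in> Y" "b \<noteq> Q.tp" "Q.rk b = n" using Q.rank_m_elem[OF tpQ] by auto
  have SR: "Some (a, b) \<in> R" using a b unfolding R_eq by auto
  obtain C0 where C0: "C0 \<subseteq> RR.down (Some (a, b))" "is_chain C0 lR" "card C0 = m + n + 1"
    using RR.rk_props(1)[OF SR] rk_R[OF a(1,2) b(1,2)] a b by auto
  have finC0: "finite C0" using finite_subset[OF C0(1) finite_subset[OF RR.down_sub RR.fin]] .
  have NR: "None \<in> R" unfolding R_eq by simp
  have downN: "RR.down None = R" unfolding RR.down_def by auto
  have NC0: "None \<notin> C0" using C0(1) unfolding RR.down_def by auto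
  let ?C = "insert None C0"
  have "?C \<subseteq> RR.down None" using C0(1) NR RR.down_sub downN by auto
  moreover have "is_chain ?C lR" using C0(2) unfolding is_chain_def by auto
  moreover have "card ?C = m + n + 1 + 1" using C0(3) NC0 finC0 by simp
  moreover have "card C \<le> m + n + 1 + 1" if C: "C \<subseteq> RR.down None" "is_chain C lR" for C
  proof -
    have fC: "finite C" using finite_subset[OF C(1) finite_subset[OF RR.down_sub RR.fin]] .
    have "C - {None} \<subseteq> R - {None}" using C(1) downN by auto
    moreover have "is_chain (C - {None}) lR" using C(2) unfolding is_chain_def by auto
    moreover have "\<forall>z\<in>C - {None}. wt z \<le> m + n"
    proof
      fix z assume z: "z \<in> C - {None}"
      hence "z \<in> R" "z \<noteq> None" using C(1) downN by auto
      then obtain c d where "z = Some (c, d)" "c \<in> X" "c \<noteq> P.tp" "d \<in> Y" "d \<noteq> Q.tp"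
        by (metis R_cases)
      thus "wt z \<le> m + n" using rkP_le rkQ_le unfolding wt_def by fastforce
    qed
    ultimately have "card (C - {None}) \<le> m + n + 1" by (rule card_chain_bound)
    moreover have "card C \<le> card (C - {None}) + 1"
    proof -
      have "C \<subseteq> insert None (C - {None})" by auto
      hence "card C \<le> card (insert None (C - {None}))" using fC by (intro card_mono) auto
      also have "card (insert None (C - {None})) = Suc (card (C - {None}))"
        by (rule card_insert_disjoint) (use fC in auto)
      finally show ?thesis by simp
    qed
    ultimately show ?thesis by linarith
  qed
  ultimately have "RR.rk None = m + n + 1" by (intro RR.rk_eqI[OF NR]) auto
  thus ?thesis unfolding poset_rank_def using R_tp unfolding RR.tp_def by simp
qed

end


context dd begin

definition "zz = (\<lambda>(xs, ys). map Some (zip xs ys))"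

lemma R_minus: "R - {None} = Some ` ((X - {P.tp}) \<times> (Y - {Q.tp}))"
  unfolding R_eq by auto

lemma wt_list:
  assumes "length xs = length ys" "set xs \<subseteq> X - {P.tp}" "set ys \<subseteq> Y - {Q.tp}"
  shows "sum_list (map RR.rk (map Some (zip xs ys))) = sum_list (map P.rk xs) + sum_list (map Q.rk ys)"
  using assms
proof (induction xs ys rule: list_induct2)
  case Nil thus ?case by simp
next
  case (Cons x xs y ys)
  have "RR.rk (Some (x, y)) = P.rk x + Q.rk y" using Cons.prems by (intro rk_R) auto
  thus ?case using Cons by simp
qed

lemma sorted_zz:
  assumes "length xs = length ys"
  shows "sorted_wrt (\<lambda>a b. lR b a) (map Some (zip xs ys)) \<longleftrightarrow>
         sorted_wrt (\<lambda>a b. leX b a) xs \<and> sorted_wrt (\<lambda>a b. leY b a) ys"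
  using assms unfolding sorted_wrt_iff_nth_less by auto

lemma Mch_R:
  "RR.Mch (R - {None}) L = zz ` (P.Mch (X - {P.tp}) L \<times> Q.Mch (Y - {Q.tp}) L)"
proof (intro set_eqI iffI)
  fix zs assume zs: "zs \<in> RR.Mch (R - {None}) L"
  have zl: "length zs = L" and zset: "set zs \<subseteq> R - {None}" and zsort: "sorted_wrt (\<lambda>a b. lR b a) zs"
    using zs unfolding RR.Mch_def by auto
  define xs where "xs = map (fst \<circ> the) zs"
  define ys where "ys = map (snd \<circ> the) zs"
  have eq: "zs = map Some (zip xs ys)"
  proof (rule nth_equalityI)
    show "length zs = length (map Some (zip xs ys))" unfolding xs_def ys_def by simp
    fix i assume i: "i < length zs"
    hence "zs ! i \<in> R - {None}" using zset nth_mem by blast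
    then obtain p where "zs ! i = Some p" by auto
    thus "zs ! i = map Some (zip xs ys) ! i" using i unfolding xs_def ys_def by simp
  qed
  have len: "length xs = L" "length ys = L" using zl unfolding xs_def ys_def by auto
  have "set xs \<subseteq> X - {P.tp}"
  proof
    fix x assume "x \<in> set xs"
    then obtain z where "z \<in> set zs" "x = fst (the z)" unfolding xs_def by auto
    thus "x \<in> X - {P.tp}" using zset unfolding R_minus by auto
  qed
  moreover have "set ys \<subseteq> Y - {Q.tp}"
  proof
    fix y assume "y \<in> set ys"
    then obtain z where "z \<in> set zs" "y = snd (the z)" unfolding ys_def by auto
    thus "y \<in> Y - {Q.tp}" using zset unfolding R_minus by auto
  qed
  moreover have "sorted_wrt (\<lambda>a b. leX b a) xs \<and> sorted_wrt (\<lambda>a b. leY b a) ys"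
    using zsort sorted_zz[of xs ys] len unfolding eq by simp
  ultimately have "(xs, ys) \<in> P.Mch (X - {P.tp}) L \<times> Q.Mch (Y - {Q.tp}) L"
    using len unfolding P.Mch_def Q.Mch_def by auto
  moreover have "zs = zz (xs, ys)" unfolding zz_def using eq by simp
  ultimately show "zs \<in> zz ` (P.Mch (X - {P.tp}) L \<times> Q.Mch (Y - {Q.tp}) L)" by blast
next
  fix zs assume "zs \<in> zz ` (P.Mch (X - {P.tp}) L \<times> Q.Mch (Y - {Q.tp}) L)"
  then obtain xs ys where xy: "xs \<in> P.Mch (X - {P.tp}) L" "ys \<in> Q.Mch (Y - {Q.tp}) L"
    "zs = map Some (zip xs ys)" unfolding zz_def by auto
  have len: "length xs = L" "length ys = L" and sx: "set xs \<subseteq> X - {P.tp}" and sy: "set ys \<subseteq> Y - {Q.tp}"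
    and so: "sorted_wrt (\<lambda>a b. leX b a) xs" "sorted_wrt (\<lambda>a b. leY b a) ys"
    using xy unfolding P.Mch_def Q.Mch_def by auto
  have "set zs \<subseteq> R - {None}"
  proof
    fix z assume "z \<in> set zs"
    then obtain p where p: "p \<in> set (zip xs ys)" "z = Some p" using xy(3) by auto
    have "fst p \<in> set xs" "snd p \<in> set ys" using p(1) set_zip_leftD set_zip_rightD
      by (metis prod.collapse)+
    thus "z \<in> R - {None}" using sx sy p(2) unfolding R_minus by (cases p) auto
  qed
  moreover have "sorted_wrt (\<lambda>a b. lR b a) zs" using sorted_zz[of xs ys] len so xy(3) by simp
  ultimately show "zs \<in> RR.Mch (R - {None}) L" using len xy(3) unfolding RR.Mch_def by auto
qed

lemma zz_inj: "inj_on zz (P.Mch (X - {P.tp}) L \<times> Q.Mch (Y - {Q.tp}) L)"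
proof (rule inj_onI)
  fix u v assume u: "u \<in> P.Mch (X - {P.tp}) L \<times> Q.Mch (Y - {Q.tp}) L"
    and v: "v \<in> P.Mch (X - {P.tp}) L \<times> Q.Mch (Y - {Q.tp}) L" and e: "zz u = zz v"
  obtain xs ys where u': "u = (xs, ys)" by (cases u)
  obtain xs' ys' where v': "v = (xs', ys')" by (cases v)
  have l: "length xs = L" "length ys = L" "length xs' = L" "length ys' = L"
    using u v u' v' unfolding P.Mch_def Q.Mch_def by auto
  have "map Some (zip xs ys) = map Some (zip xs' ys')" using e u' v' unfolding zz_def by simp
  hence z: "zip xs ys = zip xs' ys'" by (simp add: inj_map_eq_map)
  have "xs = xs'" using arg_cong[OF z, of "map fst"] l by simp
  moreover have "ys = ys'" using arg_cong[OF z, of "map snd"] l by simp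
  ultimately show "u = v" using u' v' by simp
qed

lemma Zp_R: "RR.Zp (R - {None}) L = P.Zp (X - {P.tp}) L * Q.Zp (Y - {Q.tp}) L"
proof -
  let ?A = "P.Mch (X - {P.tp}) L" and ?B = "Q.Mch (Y - {Q.tp}) L"
  have "RR.Zp (R - {None}) L = (\<Sum>zs\<in>zz ` (?A \<times> ?B). monom (1::int) (sum_list (map RR.rk zs)))"
    unfolding RR.Zp_def Mch_R ..
  also have "\<dots> = (\<Sum>u\<in>?A \<times> ?B. monom (1::int) (sum_list (map RR.rk (zz u))))"
    by (simp add: sum.reindex[OF zz_inj] o_def)
  also have "\<dots> = (\<Sum>u\<in>?A \<times> ?B. monom (1::int) (sum_list (map P.rk (fst u))) * monom (1::int) (sum_list (map Q.rk (snd u))))"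
  proof (rule sum.cong[OF refl])
    fix u assume u: "u \<in> ?A \<times> ?B"
    obtain xs ys where u': "u = (xs, ys)" by (cases u)
    have "length xs = length ys" "set xs \<subseteq> X - {P.tp}" "set ys \<subseteq> Y - {Q.tp}"
      using u u' unfolding P.Mch_def Q.Mch_def by auto
    thus "monom (1::int) (sum_list (map RR.rk (zz u))) = monom (1::int) (sum_list (map P.rk (fst u))) * monom (1::int) (sum_list (map Q.rk (snd u)))"
      using wt_list u' unfolding zz_def by (simp add: mult_monom)
  qed
  also have "\<dots> = (\<Sum>xs\<in>?A. \<Sum>ys\<in>?B. monom (1::int) (sum_list (map P.rk xs)) * monom (1::int) (sum_list (map Q.rk ys)))"
    by (rule sum.cartesian_product[symmetric, where g="\<lambda>xs ys. monom (1::int) (sum_list (map P.rk xs)) * monom (1::int) (sum_list (map Q.rk ys))", simplified split_def])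
  also have "\<dots> = P.Zp (X - {P.tp}) L * Q.Zp (Y - {Q.tp}) L"
    unfolding P.Zp_def Q.Zp_def by (rule sum_product[symmetric])
  finally show ?thesis .
qed

theorem dd_main:
  "Theta (ab_index R lR) = qbinom (m + n) n * Theta (ab_index X leX) * Theta (ab_index Y leY)"
proof -
  define FP where "FP = P.Fc (X - {P.tp})"
  define FQ where "FQ = Q.Fc (Y - {Q.tp})"
  define FR where "FR = RR.Fc (R - {RR.tp})"
  have GP: "fps_of_poly (Theta (ab_index X leX)) = Amp m * FP"
    and cP: "\<And>N L. N \<le> L \<Longrightarrow> FP $ N = coeff (P.Zp (X - {P.tp}) L) N"
    using P.main_gen[OF rkX] unfolding FP_def by auto
  have GQ: "fps_of_poly (Theta (ab_index Y leY)) = Amp n * FQ"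
    and cQ: "\<And>N L. N \<le> L \<Longrightarrow> FQ $ N = coeff (Q.Zp (Y - {Q.tp}) L) N"
    using Q.main_gen[OF rkY] unfolding FQ_def by auto
  have GR: "fps_of_poly (Theta (ab_index R lR)) = Amp (m + n) * FR"
    and cR: "\<And>N L. N \<le> L \<Longrightarrow> FR $ N = coeff (RR.Zp (R - {RR.tp}) L) N"
    using RR.main_gen[OF rank_R] unfolding FR_def by auto
  have FR: "FR = FP * FQ"
  proof (rule fps_ext)
    fix N
    have "FR $ N = coeff (P.Zp (X - {P.tp}) N * Q.Zp (Y - {Q.tp}) N) N"
      using cR[of N N] Zp_R R_tp by simp
    also have "\<dots> = (\<Sum>i\<le>N. coeff (P.Zp (X - {P.tp}) N) i * coeff (Q.Zp (Y - {Q.tp}) N) (N - i))"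
      by (rule coeff_mult)
    also have "\<dots> = (\<Sum>i\<le>N. FP $ i * FQ $ (N - i))"
      by (rule sum.cong[OF refl]) (simp add: cP[of _ N] cQ[of _ N])
    also have "\<dots> = (FP * FQ) $ N" by (simp add: fps_mult_nth atLeast0AtMost)
    finally show "FR $ N = (FP * FQ) $ N" .
  qed
  have "fps_of_poly (Theta (ab_index R lR) * AmpP m * AmpP n)
      = fps_of_poly (AmpP (m + n) * Theta (ab_index X leX) * Theta (ab_index Y leY))"
    unfolding fps_of_poly_mult Amp_fps GP GQ GR FR by (simp add: algebra_simps)
  hence "Theta (ab_index R lR) * AmpP m * AmpP n = AmpP (m + n) * Theta (ab_index X leX) * Theta (ab_index Y leY)"
    by (simp only: fps_of_poly_eq_iff)
  thus ?thesis by (rule final_alg)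
qed

end

lemma graded_fpo:
  assumes "graded_poset X le" shows "fpo X le"
proof -
  have h1: "finite X" using assms unfolding graded_poset_def by (elim conjE)
  have h2: "\<forall>x\<in>X. le x x" using assms unfolding graded_poset_def by (elim conjE)
  have h3: "\<forall>x\<in>X. \<forall>y\<in>X. le x y \<and> le y x \<longrightarrow> x = y"
    using assms unfolding graded_poset_def by (elim conjE)
  have h4: "\<forall>x\<in>X. \<forall>y\<in>X. \<forall>z\<in>X. le x y \<and> le y z \<longrightarrow> le x z"
    using assms unfolding graded_poset_def by (elim conjE)
  have h5: "\<exists>z\<in>X. \<forall>x\<in>X. le z x" using assms unfolding graded_poset_def by (elim conjE)
  have h6: "\<exists>t\<in>X. \<forall>x\<in>X. le x t" using assms unfolding graded_poset_def by (elim conjE)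
  note h = h1 h2 h3 h4 h5 h6
  show ?thesis
  proof (rule fpo.intro)
    show "finite X" by (rule h(1))
    show "le x x" if "x \<in> X" for x using h(2) that by (rule bspec)
    show "x = y" if "x \<in> X" "y \<in> X" "le x y" "le y x" for x y
      using h(3)[rule_format, of x y] that by simp
    show "le x z" if "x \<in> X" "y \<in> X" "z \<in> X" "le x y" "le y z" for x y z
      using h(4)[rule_format, of x y z] that by simp
    show "\<exists>z\<in>X. \<forall>x\<in>X. le z x" by (rule h(5))
    show "\<exists>t\<in>X. \<forall>x\<in>X. le x t" by (rule h(6))
  qed
qed

theorem mainTheorem8:
  fixes X :: "'a set" and leX :: "'a \<Rightarrow> 'a \<Rightarrow> bool"
    and Y :: "'b set" and leY :: "'b \<Rightarrow> 'b \<Rightarrow> bool"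
    and m n :: nat
  assumes "graded_poset X leX" and "graded_poset Y leY"
    and "poset_rank X leX = m + 1" and "poset_rank Y leY = n + 1"
  shows "Theta (ab_index (dd_carrier X leX Y leY) (dd_le leX leY))
         = qbinom (m + n) n * Theta (ab_index X leX) * Theta (ab_index Y leY)"
proof -
  have "dd X leX Y leY m n"
    using graded_fpo[OF assms(1)] graded_fpo[OF assms(2)] assms(3,4)
    by (intro dd.intro dd_axioms.intro)
  thus ?thesis by (rule dd.dd_main)
qed

end
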